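(* There exists $n_0$ such that for every $n\ge n_0$, the complete bipartite graph $K_{n,n}$ has no intersection representation in $\mathbb R^3$ by homothetic tetrahedra, i.e. there is no family of closed tetrahedra $\{\lambda_v P+w_v\}_{v\in V(K_{n,n})}$ (for a fixed tetrahedron $P\subset\mathbb R^3$, $\lambda_v>0$, $w_v\in\mathbb R^3$) such that for distinct vertices $u,v$ the tetrahedra of $u$ and $v$ intersect if and only if $uv$ is an edge of $K_{n,n}$. *)

theory Defs
  imports "HOL-Analysis.Analysis"
begin

definition tetrahedron :: "(real^3) set \<Rightarrow> bool" where
  "tetrahedron P \<longleftrightarrow> (\<exists>a b c d. card {a, b, c, d} = 4 \<and> \<not> affine_dependent {a, b, c, d}
                          \<and> P = convex hull {a, b, c, d})"

definition homothet :: "real \<Rightarrow> real^3 \<Rightarrow> (real^3) set \<Rightarrow> (real^3) set" where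
  "homothet lam w P = (\<lambda>x. lam *\<^sub>R x + w) ` P"

definition Knn_vertices :: "nat \<Rightarrow> (nat + nat) set" where
  "Knn_vertices n = {0..<n} <+> {0..<n}"

definition Knn_edge :: "(nat + nat) \<Rightarrow> (nat + nat) \<Rightarrow> bool" where
  "Knn_edge u v \<longleftrightarrow> (isl u \<and> \<not> isl v) \<or> (\<not> isl u \<and> isl v)"

definition homothetic_rep ::
  "'v set \<Rightarrow> ('v \<Rightarrow> 'v \<Rightarrow> bool) \<Rightarrow> (real^3) set \<Rightarrow> ('v \<Rightarrow> real) \<Rightarrow> ('v \<Rightarrow> real^3) \<Rightarrow> bool" where
  "homothetic_rep V E P lam w \<longleftrightarrow>
     (\<forall>v\<in>V. lam v > 0) \<and>
     (\<forall>u\<in>V. \<forall>v\<in>V. u \<noteq> v \<longrightarrow>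
        (homothet (lam u) (w u) P \<inter> homothet (lam v) (w v) P \<noteq> {} \<longleftrightarrow> E u v))"

end

theory Submission
  imports Defs
begin



definition S0 :: "real^3 \<Rightarrow> bool" where
  "S0 s \<longleftrightarrow> 0 \<le> s$1 \<and> 0 \<le> s$2 \<and> 0 \<le> s$3 \<and> s$1 + s$2 + s$3 \<le> 1"

lemma tet_param:
  assumes "tetrahedron P"
  shows "\<exists>\<Psi> a. linear \<Psi> \<and> inj \<Psi> \<and> surj \<Psi> \<and> P = {a + \<Psi> s | s. S0 s}"
proof -
  obtain a b c d where card: "card {a, b, c, d} = 4" and ind: "\<not> affine_dependent {a, b, c, d}"
    and P: "P = convex hull {a, b, c, d}"
    using assms unfolding tetrahedron_def by blast
  have dist: "a \<noteq> b" "a \<noteq> c" "a \<noteq> d" "b \<noteq> c" "b \<noteq> d" "c \<noteq> d"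
    using card by (auto simp: card_insert_if split: if_splits)
  define \<Psi> where "\<Psi> = (\<lambda>s::real^3. s$1 *\<^sub>R (b - a) + s$2 *\<^sub>R (c - a) + s$3 *\<^sub>R (d - a))"
  have lin: "linear \<Psi>"
    unfolding \<Psi>_def by (rule linearI) (auto simp: algebra_simps)
  have indep: "\<not> dependent ((\<lambda>x. -a + x) ` {b, c, d})"
    using ind affine_dependent_iff_dependent[of a "{b,c,d}"] dist by auto
  have dist2: "-a + b \<noteq> -a + c" "-a + b \<noteq> -a + d" "-a + c \<noteq> -a + d" using dist by auto
  have inj: "inj \<Psi>"
  proof (rule linear_injective_0[OF lin, THEN iffD2], intro allI impI)
    fix s :: "real^3" assume s0: "\<Psi> s = 0"
    show "s = 0"
    proof (rule ccontr)
      assume "s \<noteq> 0"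
      then have nz: "s$1 \<noteq> 0 \<or> s$2 \<noteq> 0 \<or> s$3 \<noteq> 0"
        by (auto simp: vec_eq_iff forall_3)
      define u where "u = (\<lambda>x. if x = -a + b then s$1 else if x = -a + c then s$2 else s$3)"
      have "dependent {-a + b, -a + c, -a + d}"
      proof (subst dependent_finite, blast, rule exI[of _ u], intro conjI)
        show "\<exists>v\<in>{-a + b, -a + c, -a + d}. u v \<noteq> 0"
          using nz dist2 unfolding u_def by auto
        show "(\<Sum>v\<in>{-a + b, -a + c, -a + d}. u v *\<^sub>R v) = 0"
          using s0 dist2 unfolding u_def \<Psi>_def by (simp add: algebra_simps)
      qed
      then show False using indep by simp
    qed
  qed
  have surj: "surj \<Psi>"
    using linear_injective_imp_surjective[OF lin inj] by simp
  have "P = {a + \<Psi> s | s. S0 s}"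
  proof
    show "P \<subseteq> {a + \<Psi> s | s. S0 s}"
    proof
      fix y assume "y \<in> P"
      then obtain u where u: "\<forall>x\<in>{a,b,c,d}. 0 \<le> u x" "sum u {a,b,c,d} = 1"
        "(\<Sum>x\<in>{a,b,c,d}. u x *\<^sub>R x) = y"
        unfolding P by (auto simp: convex_hull_finite)
      have s1: "u a + u b + u c + u d = 1" and y: "y = u a *\<^sub>R a + u b *\<^sub>R b + u c *\<^sub>R c + u d *\<^sub>R d"
        using u(2,3) dist by (auto simp: algebra_simps)
      define s :: "real^3" where "s = vector [u b, u c, u d]"
      have "S0 s" using u(1) s1 unfolding S0_def s_def by auto
      moreover have "y = a + \<Psi> s"
      proof -
        have ua: "u a = 1 - u b - u c - u d" using s1 by simp
        show ?thesis unfolding y \<Psi>_def s_def ua by (simp add: algebra_simps)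
      qed
      ultimately show "y \<in> {a + \<Psi> s | s. S0 s}" by blast
    qed
  next
    show "{a + \<Psi> s | s. S0 s} \<subseteq> P"
    proof clarify
      fix s assume "S0 s"
      define u where "u = (\<lambda>x. if x = a then 1 - s$1 - s$2 - s$3 else if x = b then s$1 else if x = c then s$2 else s$3)"
      have "\<forall>x\<in>{a,b,c,d}. 0 \<le> u x" using \<open>S0 s\<close> dist unfolding u_def S0_def by auto
      moreover have "sum u {a,b,c,d} = 1" using dist unfolding u_def by simp
      moreover have "(\<Sum>x\<in>{a,b,c,d}. u x *\<^sub>R x) = a + \<Psi> s"
        using dist unfolding u_def \<Psi>_def by (simp add: algebra_simps)
      ultimately show "a + \<Psi> s \<in> P" unfolding P convex_hull_finite[OF finite.insertI[OF finite.insertI[OF finite.insertI[OF finite.insertI[OF finite.emptyI]]]]]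
        by blast
    qed
  qed
  then show ?thesis using lin inj surj by blast
qed



lemma thresh:
  fixes f :: "'a \<Rightarrow> real"
  assumes fin: "finite X" and card: "2*m \<le> card X" and m1: "1 \<le> m"
  shows "\<exists>t. m \<le> card {x\<in>X. f x \<le> t} \<and> m \<le> card {x\<in>X. t \<le> f x}"
proof -
  define Q where "Q = {s \<in> f ` X. m \<le> card {x\<in>X. f x \<le> s}}"
  have Xne: "X \<noteq> {}" using card m1 by auto
  have "Max (f ` X) \<in> Q"
  proof -
    have "{x\<in>X. f x \<le> Max (f ` X)} = X" using fin by auto
    then show ?thesis unfolding Q_def using fin Xne card by auto
  qed
  then have Qne: "Q \<noteq> {}" by auto
  have Qfin: "finite Q" unfolding Q_def using fin by auto
  define t where "t = Min Q"
  have tQ: "t \<in> Q" unfolding t_def using Qne Qfin by simp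
  have lt: "card {x\<in>X. f x < t} < m"
  proof (rule ccontr)
    assume "\<not> ?thesis"
    then have ge: "m \<le> card {x\<in>X. f x < t}" by simp
    have ne: "{x\<in>X. f x < t} \<noteq> {}" using ge m1 by (intro notI) simp
    define s where "s = Max (f ` {x\<in>X. f x < t})"
    have sfin: "finite (f ` {x\<in>X. f x < t})" using fin by auto
    have "s \<in> f ` {x\<in>X. f x < t}" unfolding s_def using ne sfin by simp
    then have sX: "s \<in> f ` X" and slt: "s < t" by auto
    have "{x\<in>X. f x < t} \<subseteq> {x\<in>X. f x \<le> s}" unfolding s_def using sfin by auto
    then have "card {x\<in>X. f x < t} \<le> card {x\<in>X. f x \<le> s}"
      by (rule card_mono[rotated]) (use fin in auto)
    then have "s \<in> Q" unfolding Q_def using sX ge by auto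
    then have "t \<le> s" unfolding t_def using Qfin by simp
    then show False using slt by simp
  qed
  have "{x\<in>X. t \<le> f x} = X - {x\<in>X. f x < t}" by auto
  then have "card {x\<in>X. t \<le> f x} = card X - card {x\<in>X. f x < t}"
    using fin by (simp add: card_Diff_subset)
  then have "m \<le> card {x\<in>X. t \<le> f x}" using lt card by simp
  moreover have "m \<le> card {x\<in>X. f x \<le> t}" using tQ unfolding Q_def by simp
  ultimately show ?thesis by blast
qed

definition sepr :: "('a \<Rightarrow> real) \<Rightarrow> 'a set \<Rightarrow> 'a set \<Rightarrow> bool" where
  "sepr f X Y \<longleftrightarrow> (\<forall>x\<in>X. \<forall>y\<in>Y. f x \<le> f y) \<or> (\<forall>x\<in>X. \<forall>y\<in>Y. f y \<le> f x)"

lemma sepr_mono: "sepr f X Y \<Longrightarrow> X' \<subseteq> X \<Longrightarrow> Y' \<subseteq> Y \<Longrightarrow> sepr f X' Y'"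
  unfolding sepr_def by blast

lemma sep_step:
  fixes f :: "'a \<Rightarrow> real"
  assumes fx: "finite X" and fy: "finite Y" and cx: "2*m \<le> card X" and cy: "2*m \<le> card Y"
    and m1: "1 \<le> m"
  shows "\<exists>X' Y'. X' \<subseteq> X \<and> Y' \<subseteq> Y \<and> m \<le> card X' \<and> m \<le> card Y' \<and> sepr f X' Y'"
proof -
  obtain t where t1: "m \<le> card {x\<in>X. f x \<le> t}" and t2: "m \<le> card {x\<in>X. t \<le> f x}"
    using thresh[OF fx cx m1] by blast
  show ?thesis
  proof (cases "m \<le> card {y\<in>Y. t \<le> f y}")
    case True
    have "sepr f {x\<in>X. f x \<le> t} {y\<in>Y. t \<le> f y}" unfolding sepr_def
      by (intro disjI1 ballI) (simp only: mem_Collect_eq, linarith)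
    moreover have "{x\<in>X. f x \<le> t} \<subseteq> X" "{y\<in>Y. t \<le> f y} \<subseteq> Y" by auto
    ultimately show ?thesis using t1 True by blast
  next
    case False
    have "{y\<in>Y. f y < t} = Y - {y\<in>Y. t \<le> f y}" by auto
    then have "card {y\<in>Y. f y < t} = card Y - card {y\<in>Y. t \<le> f y}"
      using fy by (simp add: card_Diff_subset)
    then have c: "m \<le> card {y\<in>Y. f y < t}" using False cy by simp
    have "sepr f {x\<in>X. t \<le> f x} {y\<in>Y. f y < t}" unfolding sepr_def
      by (intro disjI2 ballI) (simp only: mem_Collect_eq, linarith)
    moreover have "{x\<in>X. t \<le> f x} \<subseteq> X" "{y\<in>Y. f y < t} \<subseteq> Y" by auto
    ultimately show ?thesis using t2 c by blast
  qed
qed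

lemma max_lem:
  fixes p p' q q' :: real
  assumes "(p\<le>q \<and> p\<le>q' \<and> p'\<le>q \<and> p'\<le>q') \<or> (q\<le>p \<and> q\<le>p' \<and> q'\<le>p \<and> q'\<le>p')"
  shows "max p p' + max q q' \<le> max p q + max p' q'"
  using assms unfolding max_def by (smt (verit))

lemma min_lem:
  fixes p p' q q' :: real
  assumes "(p\<le>q \<and> p\<le>q' \<and> p'\<le>q \<and> p'\<le>q') \<or> (q\<le>p \<and> q\<le>p' \<and> q'\<le>p \<and> q'\<le>p')"
  shows "min p q + min p' q' \<le> min p p' + min q q'"
  using assms unfolding min_def by (smt (verit))


definition box3 :: "real^3 \<Rightarrow> real \<Rightarrow> (real^3) set" where
  "box3 u h = {z. u$1 \<le> z$1 \<and> u$2 \<le> z$2 \<and> u$3 \<le> z$3 \<and> z$1 + z$2 + z$3 \<le> h}"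

lemma homothet_box:
  assumes lin: "linear \<Psi>" and P: "P = {a + \<Psi> s | s. S0 s}" and lam: "lam > 0"
    and u: "\<Psi> u = lam *\<^sub>R a + w"
  shows "homothet lam w P = \<Psi> ` box3 u (lam + u$1 + u$2 + u$3)"
proof
  show "homothet lam w P \<subseteq> \<Psi> ` box3 u (lam + u$1 + u$2 + u$3)"
  proof
    fix x assume "x \<in> homothet lam w P"
    then obtain s where s: "S0 s" and x: "x = lam *\<^sub>R (a + \<Psi> s) + w"
      unfolding homothet_def P by auto
    have "x = \<Psi> (u + lam *\<^sub>R s)"
      unfolding x linear_add[OF lin] linear_cmul[OF lin] u by (simp add: algebra_simps)
    moreover have "u + lam *\<^sub>R s \<in> box3 u (lam + u$1 + u$2 + u$3)"
    proof -
      have "lam * (s$1 + s$2 + s$3) \<le> lam * 1"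
        using s lam unfolding S0_def by (intro mult_left_mono) auto
      then have "lam * s$1 + lam * s$2 + lam * s$3 \<le> lam"
        by (simp add: distrib_left)
      then show ?thesis using s lam unfolding box3_def S0_def by auto
    qed
    ultimately show "x \<in> \<Psi> ` box3 u (lam + u$1 + u$2 + u$3)" by blast
  qed
next
  show "\<Psi> ` box3 u (lam + u$1 + u$2 + u$3) \<subseteq> homothet lam w P"
  proof
    fix x assume "x \<in> \<Psi> ` box3 u (lam + u$1 + u$2 + u$3)"
    then obtain z where z: "z \<in> box3 u (lam + u$1 + u$2 + u$3)" and x: "x = \<Psi> z" by auto
    define s where "s = (1/lam) *\<^sub>R (z - u)"
    have zs: "z = u + lam *\<^sub>R s" unfolding s_def using lam by simp
    have "S0 s"
    proof -
      have h: "(z$1 - u$1) + (z$2 - u$2) + (z$3 - u$3) \<le> lam" using z unfolding box3_def by auto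
      have "s$1 + s$2 + s$3 = ((z$1 - u$1) + (z$2 - u$2) + (z$3 - u$3)) / lam"
        unfolding s_def by (simp add: add_divide_distrib)
      also have "\<dots> \<le> 1" using h lam by simp
      finally show ?thesis using z lam unfolding S0_def s_def box3_def by auto
    qed
    moreover have "x = lam *\<^sub>R (a + \<Psi> s) + w"
      unfolding x zs linear_add[OF lin] linear_cmul[OF lin] u by (simp add: algebra_simps)
    ultimately show "x \<in> homothet lam w P" unfolding homothet_def P by blast
  qed
qed

lemma box3_int:
  "box3 u h \<inter> box3 u' h' \<noteq> {} \<longleftrightarrow>
     max (u$1) (u'$1) + max (u$2) (u'$2) + max (u$3) (u'$3) \<le> min h h'"
proof
  assume "box3 u h \<inter> box3 u' h' \<noteq> {}"
  then obtain z where "z \<in> box3 u h" "z \<in> box3 u' h'" by auto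
  then show "max (u$1) (u'$1) + max (u$2) (u'$2) + max (u$3) (u'$3) \<le> min h h'"
    unfolding box3_def by auto
next
  assume a: "max (u$1) (u'$1) + max (u$2) (u'$2) + max (u$3) (u'$3) \<le> min h h'"
  define z :: "real^3" where "z = vector [max (u$1) (u'$1), max (u$2) (u'$2), max (u$3) (u'$3)]"
  have "z \<in> box3 u h \<inter> box3 u' h'" using a unfolding z_def box3_def by auto
  then show "box3 u h \<inter> box3 u' h' \<noteq> {}" by auto
qed

lemma lin_comb:
  fixes a1 b1 c1 d1 a2 b2 c2 d2 a3 b3 c3 d3 e f g h :: real
  shows "a1+b1 \<le> c1+d1 \<Longrightarrow> a2+b2 \<le> c2+d2 \<Longrightarrow> a3+b3 \<le> c3+d3 \<Longrightarrow> e+f \<le> g+h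
    \<Longrightarrow> c1+c2+c3 \<le> e \<Longrightarrow> d1+d2+d3 \<le> f \<Longrightarrow> \<not> a1+a2+a3 \<le> g \<Longrightarrow> \<not> b1+b2+b3 \<le> h \<Longrightarrow> False"
  by linarith

lemma core:
  fixes p1 p1' q1 q1' p2 p2' q2 q2' p3 p3' q3 q3' h h' k k' :: real
  assumes "(p1\<le>q1 \<and> p1\<le>q1' \<and> p1'\<le>q1 \<and> p1'\<le>q1') \<or> (q1\<le>p1 \<and> q1\<le>p1' \<and> q1'\<le>p1 \<and> q1'\<le>p1')"
    and "(p2\<le>q2 \<and> p2\<le>q2' \<and> p2'\<le>q2 \<and> p2'\<le>q2') \<or> (q2\<le>p2 \<and> q2\<le>p2' \<and> q2'\<le>p2 \<and> q2'\<le>p2')"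
    and "(p3\<le>q3 \<and> p3\<le>q3' \<and> p3'\<le>q3 \<and> p3'\<le>q3') \<or> (q3\<le>p3 \<and> q3\<le>p3' \<and> q3'\<le>p3 \<and> q3'\<le>p3')"
    and "(h\<le>k \<and> h\<le>k' \<and> h'\<le>k \<and> h'\<le>k') \<or> (k\<le>h \<and> k\<le>h' \<and> k'\<le>h \<and> k'\<le>h')"
    and c1: "max p1 q1 + max p2 q2 + max p3 q3 \<le> min h k"
    and c2: "max p1' q1' + max p2' q2' + max p3' q3' \<le> min h' k'"
    and w1: "\<not> max p1 p1' + max p2 p2' + max p3 p3' \<le> min h h'"
    and w2: "\<not> max q1 q1' + max q2 q2' + max q3 q3' \<le> min k k'"
  shows False
  by (rule lin_comb[OF max_lem[OF assms(1)] max_lem[OF assms(2)] max_lem[OF assms(3)] min_lem[OF assms(4)]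
    c1 c2 w1 w2])

lemma two_elems: assumes "2 \<le> card X" shows "\<exists>x x'. x \<in> X \<and> x' \<in> X \<and> x \<noteq> x'"
proof -
  obtain a B where "X = insert a B" "a \<notin> B" "1 \<le> card B" "finite B"
    using assms card_le_Suc_iff[of 1 X] by auto
  moreover then obtain b C where "B = insert b C"
    using card_le_Suc_iff[of 0 B] by auto
  ultimately show ?thesis by blast
qed

theorem mainTheorem4:
  shows "\<exists>n0::nat. \<forall>n\<ge>n0. \<forall>P lam w. tetrahedron P \<longrightarrow>
           \<not> homothetic_rep (Knn_vertices n) Knn_edge P lam w"
proof (intro exI[of _ 32] allI impI notI)
  fix n :: nat and P lam w
  assume n: "32 \<le> n" and tet: "tetrahedron P"
    and rep: "homothetic_rep (Knn_vertices n) Knn_edge P lam w"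
  obtain \<Psi> a where lin: "linear \<Psi>" and inj: "inj \<Psi>" and surj: "surj \<Psi>"
    and P: "P = {a + \<Psi> s | s. S0 s}"
    using tet_param[OF tet] by blast
  define V where "V = Knn_vertices n"
  have pos: "\<And>v. v \<in> V \<Longrightarrow> lam v > 0" using rep unfolding homothetic_rep_def V_def by blast
  have edge: "\<And>u v. u \<in> V \<Longrightarrow> v \<in> V \<Longrightarrow> u \<noteq> v \<Longrightarrow>
      (homothet (lam u) (w u) P \<inter> homothet (lam v) (w v) P \<noteq> {} \<longleftrightarrow> Knn_edge u v)"
    using rep unfolding homothetic_rep_def V_def by blast
  define U where "U = (\<lambda>v. SOME u. \<Psi> u = lam v *\<^sub>R a + w v)"
  have U: "\<And>v. \<Psi> (U v) = lam v *\<^sub>R a + w v"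
    unfolding U_def by (rule someI_ex) (use surj in \<open>metis surjD\<close>)
  define H where "H = (\<lambda>v. lam v + U v$1 + U v$2 + U v$3)"
  have hb: "\<And>v. v \<in> V \<Longrightarrow> homothet (lam v) (w v) P = \<Psi> ` box3 (U v) (H v)"
    unfolding H_def by (rule homothet_box[OF lin P pos U])
  have key: "\<And>u v. u \<in> V \<Longrightarrow> v \<in> V \<Longrightarrow> u \<noteq> v \<Longrightarrow>
      (max (U u$1) (U v$1) + max (U u$2) (U v$2) + max (U u$3) (U v$3) \<le> min (H u) (H v)
       \<longleftrightarrow> Knn_edge u v)"
  proof -
    fix u v assume uv: "u \<in> V" "v \<in> V" "u \<noteq> v"
    have "\<Psi> ` box3 (U u) (H u) \<inter> \<Psi> ` box3 (U v) (H v) = \<Psi> ` (box3 (U u) (H u) \<inter> box3 (U v) (H v))"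
      using inj by (simp add: image_Int)
    then have "(homothet (lam u) (w u) P \<inter> homothet (lam v) (w v) P \<noteq> {}) \<longleftrightarrow>
        (box3 (U u) (H u) \<inter> box3 (U v) (H v) \<noteq> {})"
      unfolding hb[OF uv(1)] hb[OF uv(2)] by (simp only: image_is_empty)
    then show "?thesis u v" unfolding box3_int[symmetric] edge[OF uv] by (rule sym)
  qed
  define A :: "(nat + nat) set" where "A = Inl ` {0..<n}"
  define B :: "(nat + nat) set" where "B = Inr ` {0..<n}"
  have AV: "A \<subseteq> V" and BV: "B \<subseteq> V" unfolding A_def B_def V_def Knn_vertices_def by auto
  have fA: "finite A" and fB: "finite B" unfolding A_def B_def by auto
  have cA: "card A = n" and cB: "card B = n" unfolding A_def B_def by (auto simp: card_image)
  define g1 where "g1 = (\<lambda>v. U v $ 1)"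
  define g2 where "g2 = (\<lambda>v. U v $ 2)"
  define g3 where "g3 = (\<lambda>v. U v $ 3)"
  obtain A1 B1 where A1: "A1 \<subseteq> A" "B1 \<subseteq> B" "16 \<le> card A1" "16 \<le> card B1" "sepr g1 A1 B1"
  proof -
    have "\<exists>X' Y'. X' \<subseteq> A \<and> Y' \<subseteq> B \<and> 16 \<le> card X' \<and> 16 \<le> card Y' \<and> sepr g1 X' Y'"
      by (rule sep_step[OF fA fB]) (use cA cB n in simp_all)
    then show ?thesis using that by blast
  qed
  have fA1: "finite A1" "finite B1" using A1 fA fB finite_subset by auto
  obtain A2 B2 where A2: "A2 \<subseteq> A1" "B2 \<subseteq> B1" "8 \<le> card A2" "8 \<le> card B2" "sepr g2 A2 B2"
  proof -
    have "\<exists>X' Y'. X' \<subseteq> A1 \<and> Y' \<subseteq> B1 \<and> 8 \<le> card X' \<and> 8 \<le> card Y' \<and> sepr g2 X' Y'"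
      by (rule sep_step[OF fA1]) (use A1(3,4) in simp_all)
    then show ?thesis using that by blast
  qed
  have fA2: "finite A2" "finite B2" using A2 fA1 finite_subset by auto
  obtain A3 B3 where A3: "A3 \<subseteq> A2" "B3 \<subseteq> B2" "4 \<le> card A3" "4 \<le> card B3" "sepr g3 A3 B3"
  proof -
    have "\<exists>X' Y'. X' \<subseteq> A2 \<and> Y' \<subseteq> B2 \<and> 4 \<le> card X' \<and> 4 \<le> card Y' \<and> sepr g3 X' Y'"
      by (rule sep_step[OF fA2]) (use A2(3,4) in simp_all)
    then show ?thesis using that by blast
  qed
  have fA3: "finite A3" "finite B3" using A3 fA2 finite_subset by auto
  obtain A4 B4 where A4: "A4 \<subseteq> A3" "B4 \<subseteq> B3" "2 \<le> card A4" "2 \<le> card B4" "sepr H A4 B4"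
  proof -
    have "\<exists>X' Y'. X' \<subseteq> A3 \<and> Y' \<subseteq> B3 \<and> 2 \<le> card X' \<and> 2 \<le> card Y' \<and> sepr H X' Y'"
      by (rule sep_step[OF fA3]) (use A3(3,4) in simp_all)
    then show ?thesis using that by blast
  qed
  have s1: "sepr g1 A4 B4"
    by (rule sepr_mono[OF A1(5) subset_trans[OF A4(1) subset_trans[OF A3(1) A2(1)]]
          subset_trans[OF A4(2) subset_trans[OF A3(2) A2(2)]]])
  have s2: "sepr g2 A4 B4"
    by (rule sepr_mono[OF A2(5) subset_trans[OF A4(1) A3(1)] subset_trans[OF A4(2) A3(2)]])
  have s3: "sepr g3 A4 B4" by (rule sepr_mono[OF A3(5) A4(1) A4(2)])
  obtain x x' where xx: "x \<in> A4" "x' \<in> A4" "x \<noteq> x'"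
    using two_elems[OF A4(3)] by blast
  obtain y y' where yy: "y \<in> B4" "y' \<in> B4" "y \<noteq> y'"
    using two_elems[OF A4(4)] by blast
  have xA: "x \<in> A" "x' \<in> A" using xx A1(1) A2(1) A3(1) A4(1) by blast+
  have yB: "y \<in> B" "y' \<in> B" using yy A1(2) A2(2) A3(2) A4(2) by blast+
  have isl: "isl x" "isl x'" "\<not> isl y" "\<not> isl y'" using xA yB unfolding A_def B_def by auto
  have xV: "x \<in> V" "x' \<in> V" "y \<in> V" "y' \<in> V" using xA yB AV BV by auto
  have ne: "x \<noteq> y" "x' \<noteq> y'" using isl by auto
  have e1: "Knn_edge x y" "Knn_edge x' y'" "\<not> Knn_edge x x'" "\<not> Knn_edge y y'"
    using isl unfolding Knn_edge_def by auto
  have c1: "max (U x$1) (U y$1) + max (U x$2) (U y$2) + max (U x$3) (U y$3) \<le> min (H x) (H y)"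
    using key[OF xV(1) xV(3) ne(1)] e1(1) by blast
  have c2: "max (U x'$1) (U y'$1) + max (U x'$2) (U y'$2) + max (U x'$3) (U y'$3) \<le> min (H x') (H y')"
    using key[OF xV(2) xV(4) ne(2)] e1(2) by blast
  have w1: "\<not> max (U x$1) (U x'$1) + max (U x$2) (U x'$2) + max (U x$3) (U x'$3) \<le> min (H x) (H x')"
    using key[OF xV(1) xV(2) xx(3)] e1(3) by blast
  have w2: "\<not> max (U y$1) (U y'$1) + max (U y$2) (U y'$2) + max (U y$3) (U y'$3) \<le> min (H y) (H y')"
    using key[OF xV(3) xV(4) yy(3)] e1(4) by blast
  have sp: "\<And>f. sepr f A4 B4 \<Longrightarrow>
     (f x\<le>f y \<and> f x\<le>f y' \<and> f x'\<le>f y \<and> f x'\<le>f y') \<or> (f y\<le>f x \<and> f y\<le>f x' \<and> f y'\<le>f x \<and> f y'\<le>f x')"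
  proof -
    fix f assume "sepr f A4 B4"
    then show "?thesis f" unfolding sepr_def using xx(1,2) yy(1,2) by (elim disjE) fast+
  qed
  show False
    using core[OF sp[OF s1, unfolded g1_def] sp[OF s2, unfolded g2_def] sp[OF s3, unfolded g3_def]
        sp[OF A4(5)] c1 c2 w1 w2] .
qed

end
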